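(* Let $b\ge2$ and $s\ge1$ be integers, and let $M_s(b)$ be the number of tuples $(d_1,\dots,d_s)\in\mathbb N^s$ with $d_1\ge d_2\ge\cdots\ge d_s\ge1$, $d_1\ge2$ and $d_1\cdots d_s=b$. Then $M_s(b)\le b^{\log_2\log_2 b}$. *)

theory Defs
  imports "HOL-Analysis.Analysis"
begin

text \<open>Tuples (d_1,...,d_s) are represented as lists ds of length s, with ds ! 0 = d_1.\<close>
definition M :: "nat \<Rightarrow> nat \<Rightarrow> nat" where
  "M s b = card {ds :: nat list. length ds = s \<and> sorted_wrt (\<ge>) ds \<and>
                 (\<forall>d\<in>set ds. d \<ge> 1) \<and> ds ! 0 \<ge> 2 \<and> prod_list ds = b}"

end

theory Submission
  imports Defs "HOL-Library.Multiset" "HOL-Library.Log_Nat"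
begin

definition Fs :: "nat \<Rightarrow> nat multiset set" where
  "Fs b = {A. (\<forall>x\<in>#A. 2 \<le> x) \<and> prod_mset A = b}"

lemma pow_size_le: "(\<forall>x\<in>#A. 2 \<le> (x::nat)) \<Longrightarrow> 2 ^ size A \<le> prod_mset A"
proof (induction A)
  case empty then show ?case by simp
next
  case (add x A)
  then have "2 ^ size A \<le> prod_mset A" "2 \<le> x" by auto
  then show ?case by (simp add: mult_mono)
qed

lemma finite_Fs: assumes "b \<ge> 1" shows "finite (Fs b)"
proof -
  have "Fs b \<subseteq> (\<Union>n\<le>b. multisets_of_size {..b} n)"
  proof
    fix A assume A: "A \<in> Fs b"
    then have h: "\<forall>x\<in>#A. 2 \<le> x" "prod_mset A = b" by (auto simp: Fs_def)
    have "set_mset A \<subseteq> {..b}"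
    proof
      fix x assume "x \<in># A"
      then have "x dvd b" using h(2) by (metis dvd_prod_mset finite_set_mset)
      then show "x \<in> {..b}" using assms by (auto dest: dvd_imp_le)
    qed
    moreover have "size A \<le> b"
    proof -
      have "size A < 2 ^ size A" by simp
      also have "\<dots> \<le> b" using pow_size_le[OF h(1)] h(2) by simp
      finally show ?thesis by simp
    qed
    ultimately show "A \<in> (\<Union>n\<le>b. multisets_of_size {..b} n)"
      by (auto simp: multisets_of_size_def)
  qed
  then show ?thesis by (rule finite_subset) auto
qed

lemma Fs_step:
  assumes p: "prime p" and c: "c \<ge> 1" and sz: "\<forall>A\<in>Fs c. size A \<le> k"
  shows "card (Fs (p * c)) \<le> (k + 1) * card (Fs c)"
proof -
  define S where "S = Sigma (Fs c) (\<lambda>A. insert None (Some ` set_mset A))"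
  define psi where "psi = (\<lambda>(A, ch). case ch of None \<Rightarrow> A + {#p#}
                       | Some y \<Rightarrow> A - {#y#} + {#y * p#})"
  have fin: "finite (Fs c)" using finite_Fs c by simp
  have finS: "finite S" unfolding S_def using fin by auto
  have sub: "Fs (p * c) \<subseteq> psi ` S"
  proof
    fix B assume B: "B \<in> Fs (p * c)"
    then have hB: "\<forall>x\<in>#B. 2 \<le> x" "prod_mset B = p * c" by (auto simp: Fs_def)
    have "p dvd prod_mset B" using hB by simp
    then obtain x where x: "x \<in># B" "p dvd x"
      using p by (metis prime_dvd_prod_mset_iff)
    have Bx: "B = (B - {#x#}) + {#x#}" using x by simp
    have prodB: "prod_mset (B - {#x#}) * x = p * c"
      using hB(2) x(1) by (metis prod_mset.remove mult.commute)
    obtain m where m: "x = p * m" using x(2) by blast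
    have pp: "p > 0" using p prime_gt_0_nat by blast
    have m0: "m \<ge> 1" using m hB(1) x(1) by (cases m) auto
    have prodR: "prod_mset (B - {#x#}) * m = c" using prodB m pp by simp
    show "B \<in> psi ` S"
    proof (cases "m = 1")
      case True
      define A where "A = B - {#x#}"
      have "A \<in> Fs c" using prodR True hB(1) unfolding A_def Fs_def
        by (auto dest: in_diffD)
      moreover have "psi (A, None) = B" unfolding psi_def A_def using True m Bx by simp
      ultimately show ?thesis unfolding S_def by force
    next
      case False
      then have m2: "m \<ge> 2" using m0 by simp
      define A where "A = B - {#x#} + {#m#}"
      have "A \<in> Fs c" using prodR m2 hB(1) unfolding A_def Fs_def
        by (auto dest: in_diffD simp: mult.commute)
      moreover have "psi (A, Some m) = B" unfolding psi_def A_def using m Bx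
        by (simp add: mult.commute)
      moreover have "m \<in># A" unfolding A_def by simp
      ultimately show ?thesis unfolding S_def by force
    qed
  qed
  have "card (Fs (p * c)) \<le> card (psi ` S)"
    using sub finS by (intro card_mono) auto
  also have "\<dots> \<le> card S" using finS by (rule card_image_le)
  also have "card S = (\<Sum>A\<in>Fs c. card (insert None (Some ` set_mset A)))"
    unfolding S_def using fin by (subst card_SigmaI) auto
  also have "\<dots> \<le> (\<Sum>A\<in>Fs c. k + 1)"
  proof (rule sum_mono)
    fix A assume A: "A \<in> Fs c"
    have "card (insert None (Some ` set_mset A)) \<le> card (Some ` set_mset A) + 1"
      by (simp add: card_insert_le_m1 card_insert_if)
    also have "card (Some ` set_mset A) = card (set_mset A)" by (simp add: card_image)
    also have "card (set_mset A) \<le> size A"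
    proof -
      obtain xs where "mset xs = A" using ex_mset[of A] by blast
      then show ?thesis by (metis card_length set_mset_mset size_mset)
    qed
    also have "size A \<le> k" using sz A by simp
    finally show "card (insert None (Some ` set_mset A)) \<le> k + 1" by simp
  qed
  also have "\<dots> = (k + 1) * card (Fs c)" by simp
  finally show ?thesis .
qed

lemma Fs_bound: "b \<ge> 1 \<Longrightarrow> b < 2 ^ (k + 1) \<Longrightarrow> card (Fs b) \<le> k ^ k"
proof (induction b arbitrary: k rule: less_induct)
  case (less b)
  show ?case
  proof (cases "b = 1")
    case True
    have "Fs 1 = {{#}}"
    proof -
      have "A = {#}" if "\<forall>x\<in>#A. 2 \<le> x" "prod_mset A = (1::nat)" for A
      proof -
        have "(2::nat) ^ size A \<le> 1" using pow_size_le[OF that(1)] that(2) by simp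
        then have "size A = 0"
          using one_less_power[of "2::nat" "size A"] by (cases "size A = 0") auto
        then show ?thesis by simp
      qed
      then show ?thesis by (auto simp: Fs_def)
    qed
    then show ?thesis using True by (cases "k = 0") (auto simp: Suc_le_eq)
  next
    case False
    then have b2: "b \<ge> 2" using less.prems by simp
    obtain p where p: "prime p" "p dvd b" using b2 prime_factor_nat[of b] by auto
    obtain c where bc: "b = p * c" using p by blast
    have p2: "p \<ge> 2" using p prime_ge_2_nat by blast
    have c1: "c \<ge> 1" using bc b2 by (cases c) auto
    have "2 * c \<le> b" using bc p2 by simp
    then have "c < b" using c1 by simp
    have "k \<noteq> 0" using b2 less.prems by (cases k) auto
    then obtain k' where k: "k = Suc k'" by (cases k) auto
    have ck: "c < 2 ^ (k' + 1)" using \<open>2 * c \<le> b\<close> less.prems k by simp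
    have IH: "card (Fs c) \<le> k' ^ k'" using less.IH[OF \<open>c < b\<close> c1 ck] .
    have sz: "\<forall>A\<in>Fs c. size A \<le> k'"
    proof
      fix A assume "A \<in> Fs c"
      then have "2 ^ size A \<le> c" using pow_size_le by (auto simp: Fs_def)
      then have "2 ^ size A < (2::nat) ^ Suc k'" using ck by simp
      then have "size A < Suc k'" using power_strict_increasing_iff[of "2::nat" "size A" "Suc k'"] by simp
      then show "size A \<le> k'" by simp
    qed
    have "card (Fs b) \<le> (k' + 1) * card (Fs c)" using Fs_step[OF p(1) c1 sz] bc by simp
    also have "\<dots> \<le> (k' + 1) * k' ^ k'" using IH by (rule mult_le_mono2)
    also have "\<dots> \<le> (k' + 1) * (k' + 1) ^ k'" by (intro mult_le_mono2 power_mono) auto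
    also have "\<dots> = k ^ k" using k by simp
    finally show ?thesis .
  qed
qed

lemma M_le_Fs:
  assumes "b \<ge> 1"
  shows "M s b \<le> card (Fs b)"
proof -
  define T where "T = {ds :: nat list. length ds = s \<and> sorted_wrt (\<ge>) ds \<and>
                 (\<forall>d\<in>set ds. d \<ge> 1) \<and> ds ! 0 \<ge> 2 \<and> prod_list ds = b}"
  define f where "f = (\<lambda>ds::nat list. mset (filter (\<lambda>d. 2 \<le> d) ds))"
  have key: "mset ds = f ds + replicate_mset (length ds - size (f ds)) 1"
    if "\<forall>d\<in>set ds. d \<ge> 1" for ds :: "nat list"
    using that
  proof (induction ds)
    case Nil then show ?case by (simp add: f_def)
  next
    case (Cons a ds)
    have sl: "size (f ds) \<le> length ds" unfolding f_def using size_filter_mset_lesseq[of "\<lambda>d. 2 \<le> d" "mset ds"] by simp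
    show ?case
    proof (cases "2 \<le> a")
      case True then show ?thesis using Cons by (simp add: f_def)
    next
      case False
      then have "a = 1" using Cons.prems by simp
      then show ?thesis using Cons sl by (simp add: f_def Suc_diff_le)
    qed
  qed
  have inj: "inj_on f T"
  proof (rule inj_onI)
    fix x y assume x: "x \<in> T" and y: "y \<in> T" and e: "f x = f y"
    have "mset x = mset y" using key[of x] key[of y] x y e by (simp add: T_def)
    then have "mset (rev x) = mset (rev y)" by simp
    moreover have "sorted (rev x)" "sorted (rev y)" using x y
      by (auto simp: T_def sorted_wrt_rev)
    ultimately show "x = y"
      by (metis properties_for_sort rev_rev_ident)
  qed
  have img: "f ` T \<subseteq> Fs b"
  proof
    fix A assume "A \<in> f ` T"
    then obtain ds where ds: "ds \<in> T" "A = f ds" by blast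
    have "prod_mset (mset ds) = b" using ds by (simp add: T_def prod_mset_prod_list)
    then have "prod_mset A = b" using key[of ds] ds by (simp add: T_def)
    then show "A \<in> Fs b" using ds by (simp add: Fs_def f_def)
  qed
  have "M s b = card T" by (simp add: M_def T_def)
  also have "\<dots> \<le> card (Fs b)"
    using card_inj_on_le[OF inj img finite_Fs[OF assms]] .
  finally show ?thesis .
qed

theorem lemma5p4:
  fixes b s :: nat
  assumes "b \<ge> 2" and "s \<ge> 1"
  shows "real (M s b) \<le> real b powr (log 2 (log 2 (real b)))"
proof -
  define k where "k = floorlog 2 b - 1"
  have fb: "2 ^ (floorlog 2 b - 1) \<le> b \<and> b < 2 ^ floorlog 2 b"
    using floorlog_bounds[of b 2] assms by simp
  have fl1: "floorlog 2 b \<ge> 1" using fb by (cases "floorlog 2 b") auto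
  have kb: "2 ^ k \<le> b" "b < 2 ^ (k + 1)" using fb fl1 by (auto simp: k_def)
  have k1: "k \<ge> 1"
  proof (rule ccontr)
    assume "\<not> k \<ge> 1" then have "k = 0" by simp
    then show False using kb assms by simp
  qed
  define L where "L = log 2 (real b)"
  have kL: "real k \<le> L"
  proof -
    have "real (2 ^ k) \<le> real b" using kb by linarith
    then have "(2::real) powr real k \<le> real b" by (simp add: powr_realpow)
    then show ?thesis unfolding L_def using assms by (simp add: le_log_iff)
  qed
  have L1: "L \<ge> 1" using kL k1 by simp
  have "real (M s b) \<le> real (card (Fs b))" using M_le_Fs assms by simp
  also have "\<dots> \<le> real (k ^ k)" using Fs_bound[OF _ kb(2)] assms by simp
  also have "\<dots> = real k ^ k" by simp
  also have "\<dots> \<le> L ^ k" using kL by (simp add: power_mono)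
  also have "\<dots> = L powr real k" using L1 by (simp add: powr_realpow)
  also have "\<dots> \<le> L powr L" using L1 kL by (simp add: powr_mono)
  also have "L powr L = real b powr (log 2 L)"
  proof -
    have "L powr L = exp (L * ln L)" using L1 by (simp add: powr_def)
    also have "L * ln L = ln (real b) * (ln L / ln 2)" unfolding L_def log_def by simp
    also have "exp \<dots> = real b powr (log 2 L)" using assms by (simp add: powr_def log_def)
    finally show ?thesis .
  qed
  finally show ?thesis unfolding L_def .
qed

end
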